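(* Let $m\ge1$, $q=2^m$, let $n$ be odd, and let $L$ and $\lambda$ be $2$-linear polynomials over $\mathbb F_{q^n}$. Assume that $\mathrm{Tr}(x^{q+1})+L(x)$ is a permutation polynomial of $\mathbb F_{q^n}$. Then $|\ker L|\le q$, and moreover: (i) if $\lambda^\prime(\ker\mathrm{Tr})=\ker\mathrm{Tr}$ and $\mathrm{Tr}(\lambda^\prime(x))=\mathrm{Tr}(x)$ for all $x\in\mathbb F_{q^n}$, then both $\mathrm{Tr}(x^{q+1})+L(\lambda(x))$ and $\mathrm{Tr}(x^{q+1})+\lambda(L(x))$ are permutation polynomials of $\mathbb F_{q^n}$; (ii) if $x\mapsto x+\mathrm{Tr}(\lambda^\prime(x))$ is a permutation of $\mathbb F_q$, then both \[\mathrm{Tr}(x^{q+1})+L(x)+L(\mathrm{Tr}(\lambda(x)))+\mathrm{Tr}(\lambda(x))^2\] and \[\mathrm{Tr}(x^{q+1})+L(x)+\mathrm{Tr}(\lambda(L(x)))+\mathrm{Tr}(\lambda(x^2))\] are permutation polynomials of $\mathbb F_{q^n}$.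
   Context: $\mathrm{Tr}$ denotes the trace map of $\mathbb F_{q^n}$ over $\mathbb F_q$. A $2$-linear polynomial over $\mathbb F_{q^n}$ has the form $\sum_{j=0}^{mn-1}a_jx^{2^j}$; its adjoint is $\sum_j(a_jx)^{2^{-j}}$, where $y\mapsto y^{2^{-j}}$ is the inverse of $y\mapsto y^{2^j}$ on $\mathbb F_{q^n}$. Polynomials are regarded as maps on $\mathbb F_{q^n}$; $\ker$ denotes the kernel of an additive map. *)

theory Defs
  imports Main
begin

text \<open>Throughout, the ambient field F_(q^n) with q = 2^m is a finite field type 'a
  with CARD('a) = 2^(m*n).  Elements of F_q are identified with the subfield
  {x. x^q = x} of F_(q^n).\<close>

definition trace :: "nat \<Rightarrow> nat \<Rightarrow> 'a::field \<Rightarrow> 'a" where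
  "trace m n x = (\<Sum>i<n. x ^ ((2 ^ m) ^ i))"

definition subfield_q :: "nat \<Rightarrow> 'a::field set" where
  "subfield_q m = {x. x ^ (2 ^ m) = x}"

definition lin2 :: "nat \<Rightarrow> nat \<Rightarrow> (nat \<Rightarrow> 'a::field) \<Rightarrow> 'a \<Rightarrow> 'a" where
  "lin2 m n a x = (\<Sum>j<m*n. a j * x ^ (2 ^ j))"

text \<open>Its adjoint sum_j (a_j x)^(2^(-j)); on F_(2^(mn)) the inverse of y \<mapsto> y^(2^j)
  is y \<mapsto> y^(2^((mn - j) mod mn)).\<close>
definition adj2 :: "nat \<Rightarrow> nat \<Rightarrow> (nat \<Rightarrow> 'a::field) \<Rightarrow> 'a \<Rightarrow> 'a" where
  "adj2 m n a x = (\<Sum>j<m*n. (a j * x) ^ (2 ^ ((m*n - j) mod (m*n))))"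

end

theory Submission
  imports Defs "HOL-Number_Theory.Residues" "HOL-Computational_Algebra.Polynomial"
begin

lemma nonvanish:
  fixes e :: "nat \<Rightarrow> nat"
  assumes inj: "inj_on e {..<k}" and k: "0 < k" and bnd: "\<forall>i<k. e i < card (UNIV::'a set)"
  shows "\<exists>x::'a::{field,finite}. (\<Sum>i<k. x ^ e i) \<noteq> 0"
proof (rule ccontr)
  assume "\<not> ?thesis"
  hence all: "\<And>x::'a. (\<Sum>i<k. x ^ e i) = 0" by blast
  define p :: "'a poly" where "p = (\<Sum>i<k. monom 1 (e i))"
  have ev: "poly p x = (\<Sum>i<k. x ^ e i)" for x by (simp add: p_def poly_sum poly_monom)
  have c: "coeff p j = (\<Sum>i<k. if e i = j then 1 else 0)" for j
    by (simp add: p_def coeff_sum coeff_monom)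
  have "(\<Sum>i<k. if e i = e 0 then (1::'a) else 0) = (\<Sum>i<k. if i = 0 then 1 else 0)"
    apply (rule sum.cong, simp)
    using inj k by (auto dest: inj_onD)
  also have "\<dots> = 1" using k by (simp add: sum.delta)
  finally have "coeff p (e 0) = 1" using c by simp
  hence p0: "p \<noteq> 0" by auto
  have "degree p \<le> card (UNIV::'a set) - 1"
  proof (rule degree_le, intro allI impI)
    fix j assume "card (UNIV::'a set) - 1 < j"
    hence "\<forall>i<k. e i \<noteq> j" using bnd by fastforce
    thus "coeff p j = 0" using c by simp
  qed
  moreover have "{x. poly p x = 0} = UNIV" using all ev by auto
  hence "card (UNIV::'a set) \<le> degree p" using card_poly_roots_bound[OF p0] by simp
  moreover have "card (UNIV::'a set) > 0" by (simp add: finite_UNIV_card_ge_0)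
  ultimately show False by linarith
qed

definition T2 :: "nat \<Rightarrow> nat \<Rightarrow> 'a::field \<Rightarrow> 'a" where
  "T2 m n x = (\<Sum>i<m*n. x ^ (2 ^ i))"

locale ff =
  fixes m n :: nat and ty :: "'a::{field,finite} itself"
  assumes m1: "m \<ge> 1" and nodd: "odd n"
    and cardF: "card (UNIV :: 'a set) = 2 ^ (m * n)"
begin

lemma n1: "n \<ge> 1" using nodd by (cases n) auto
lemma mn1: "m * n \<ge> 1" using m1 n1 by simp

lemma char2: "(2::'a) = 0"
proof -
  have d: "CHAR('a) dvd 2 ^ (m*n)" using CHAR_dvd_CARD[where 'a='a] cardF by simp
  have "CHAR('a) > 0" by (simp add: finite_imp_CHAR_pos)
  hence pr: "prime CHAR('a)" by (simp add: prime_CHAR_semidom)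
  hence "CHAR('a) dvd 2" using d prime_dvd_power by blast
  hence "CHAR('a) = 2" using pr by (metis prime_nat_iff two_is_prime_nat prime_gt_1_nat less_irrefl)
  thus ?thesis using of_nat_CHAR[where 'a='a] by simp
qed

lemma add_self [simp]: "x + x = (0::'a)"
  by (metis char2 mult_2 mult_zero_left)

lemma minus_self [simp]: "- x = (x::'a)"
  by (metis add_self add_eq_0_iff)

lemma diff_is_add: "x - y = (x::'a) + y"
  by (metis minus_self diff_conv_add_uminus)

lemma eq_iff_add: "(x = y) \<longleftrightarrow> (x::'a) + y = 0"
  by (metis add_self add.assoc add_0_right add.commute)

lemma sq_add: "(x + y) ^ 2 = (x::'a) ^ 2 + y ^ 2"
proof -
  have "(x + y) ^ 2 = x^2 + y^2 + 2*x*y" by (simp add: power2_sum)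
  thus ?thesis by (simp add: char2)
qed

lemma frob_add: "(x + y) ^ (2 ^ k) = (x::'a) ^ (2 ^ k) + y ^ (2 ^ k)"
proof (induction k)
  case 0 then show ?case by simp
next
  case (Suc k)
  have "(x + y) ^ (2 ^ Suc k) = ((x + y) ^ (2 ^ k)) ^ 2" by (simp add: power_mult[symmetric] mult.commute)
  also have "\<dots> = (x ^ (2^k)) ^ 2 + (y ^ (2^k)) ^ 2" using Suc sq_add by simp
  also have "\<dots> = x ^ (2 ^ Suc k) + y ^ (2 ^ Suc k)" by (simp add: power_mult[symmetric] mult.commute)
  finally show ?case .
qed

lemma frob_sum: "(\<Sum>i\<in>A. f i) ^ (2 ^ k) = (\<Sum>i\<in>A. (f i :: 'a) ^ (2 ^ k))"
proof (induction A rule: infinite_finite_induct)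
  case (insert x F) then show ?case by (simp add: frob_add)
qed auto

lemma fermat0: "x ^ (card (UNIV::'a set)) = (x::'a)"
proof (cases "x = 0")
  case True then show ?thesis by (simp add: cardF)
next
  case False
  have "(\<Prod>y\<in>-{0}. x * y) = (\<Prod>y\<in>-{0}. (y::'a))"
    by (rule prod.reindex_bij_witness[where i="\<lambda>y. y / x" and j="\<lambda>y. x * y"]) (use False in auto)
  hence "x ^ card (-{0::'a}) * (\<Prod>y\<in>-{0}. y) = (\<Prod>y\<in>-{0::'a}. y)"
    by (simp add: prod.distrib)
  moreover have "(\<Prod>y\<in>-{0::'a}. y) \<noteq> 0" by simp
  ultimately have "x ^ card (-{0::'a}) = 1" by simp
  moreover have "card (UNIV::'a set) = Suc (card (-{0::'a}))"
    by (metis Compl_eq_Diff_UNIV card_Suc_Diff1 finite iso_tuple_UNIV_I)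
  ultimately show ?thesis by simp
qed

lemma fermat: "x ^ (2 ^ (m*n)) = (x::'a)"
  using fermat0 cardF by simp

lemma fermat_t: "x ^ (2 ^ (m*n*t)) = (x::'a)"
proof (induction t)
  case (Suc t)
  have "x ^ (2 ^ (m*n*Suc t)) = (x ^ (2 ^ (m*n*t))) ^ (2 ^ (m*n))"
    by (simp add: power_add power_mult[symmetric] algebra_simps)
  then show ?case using Suc fermat by simp
qed simp

lemma pow_mod: "x ^ (2 ^ j) = (x::'a) ^ (2 ^ (j mod (m*n)))"
proof -
  have "j = m*n*(j div (m*n)) + j mod (m*n)" by simp
  hence "x ^ (2 ^ j) = (x ^ (2 ^ (m*n*(j div (m*n))))) ^ (2 ^ (j mod (m*n)))"
    by (metis power_add power_mult)
  thus ?thesis using fermat_t by simp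
qed

end

context ff
begin

abbreviation Fq :: "'a set" where "Fq \<equiv> subfield_q m"

lemma inFq: "(x::'a) \<in> Fq \<longleftrightarrow> x ^ (2 ^ m) = x"
  by (simp add: subfield_q_def)

lemma pow_comm: "((x::'a) ^ a) ^ b = (x ^ b) ^ a"
  by (metis power_mult mult.commute)

lemma Fq_pow: "(x::'a) \<in> Fq \<Longrightarrow> x ^ (2 ^ (m*i)) = x"
proof (induction i)
  case (Suc i)
  have "x ^ (2 ^ (m * Suc i)) = (x ^ (2 ^ m)) ^ (2 ^ (m*i))"
    by (simp add: power_add power_mult[symmetric] algebra_simps)
  then show ?case using Suc by (simp add: inFq)
qed simp

lemma Fq_add: "x \<in> Fq \<Longrightarrow> y \<in> Fq \<Longrightarrow> (x::'a) + y \<in> Fq"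
  by (simp add: inFq frob_add)
lemma Fq_mult: "x \<in> Fq \<Longrightarrow> y \<in> Fq \<Longrightarrow> (x::'a) * y \<in> Fq"
  by (simp add: inFq power_mult_distrib)
lemma Fq_div: "x \<in> Fq \<Longrightarrow> y \<in> Fq \<Longrightarrow> (x::'a) / y \<in> Fq"
  by (simp add: inFq power_divide)
lemma Fq_sq: "x \<in> Fq \<Longrightarrow> (x::'a) ^ 2 \<in> Fq"
  by (simp add: inFq pow_comm[of x 2])
lemma Fq_0: "(0::'a) \<in> Fq" by (simp add: inFq)
lemma Fq_1: "(1::'a) \<in> Fq" by (simp add: inFq)

lemma of_nat_n: "(of_nat n :: 'a) = 1"
proof -
  obtain k where "n = 2*k+1" using nodd oddE by blast
  thus ?thesis by (simp add: char2)
qed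

lemma tr_def': "trace m n (x::'a) = (\<Sum>i<n. x ^ (2 ^ (m*i)))"
  by (simp add: trace_def power_mult)

lemma tr_add: "trace m n ((x::'a) + y) = trace m n x + trace m n y"
  by (simp add: tr_def' frob_add sum.distrib)

lemma tr_scal: "c \<in> Fq \<Longrightarrow> trace m n ((c::'a) * x) = c * trace m n x"
  by (simp add: tr_def' power_mult_distrib Fq_pow sum_distrib_left)

lemma sum_shift_cyc:
  assumes "g n = g 0"
  shows "(\<Sum>i<n. g (Suc i)) = (\<Sum>i<n. (g i :: 'a))"
proof -
  have "(\<Sum>i<Suc n. g i) = g 0 + (\<Sum>i<n. g (Suc i))" by (rule sum.lessThan_Suc_shift)
  moreover have "(\<Sum>i<Suc n. g i) = (\<Sum>i<n. g i) + g n" by simp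
  ultimately show ?thesis using assms by (simp add: add.commute)
qed

lemma tr_Fq: "trace m n (x::'a) \<in> Fq"
proof -
  have "trace m n x ^ (2 ^ m) = (\<Sum>i<n. x ^ (2 ^ (m * Suc i)))"
    by (simp add: tr_def' frob_sum power_mult[symmetric] power_add[symmetric] algebra_simps)
  also have "\<dots> = (\<Sum>i<n. x ^ (2 ^ (m * i)))"
    by (rule sum_shift_cyc[where g="\<lambda>i. x ^ (2 ^ (m * i))"]) (simp add: fermat)
  finally show ?thesis by (simp add: inFq tr_def')
qed

lemma tr_pow1: "trace m n ((x::'a) ^ (2 ^ m)) = trace m n x"
proof -
  have "trace m n (x ^ (2 ^ m)) = trace m n x ^ (2 ^ m)"
    by (simp add: tr_def' frob_sum pow_comm[of x])
  thus ?thesis using tr_Fq inFq by simp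
qed

lemma tr_pow: "trace m n ((x::'a) ^ (2 ^ (m*k))) = trace m n x"
proof (induction k)
  case (Suc k)
  have "x ^ (2 ^ (m * Suc k)) = (x ^ (2 ^ (m*k))) ^ (2 ^ m)"
    by (simp add: power_add power_mult[symmetric] algebra_simps)
  then show ?case using Suc tr_pow1 by simp
qed simp

lemma tr_const: "c \<in> Fq \<Longrightarrow> trace m n (c::'a) = c"
  by (simp add: tr_def' Fq_pow of_nat_n)

lemma tr_nonzero: "\<exists>w::'a. trace m n w \<noteq> 0"
proof -
  have "\<exists>x::'a. (\<Sum>i<n. x ^ (2 ^ (m*i))) \<noteq> 0"
  proof (rule nonvanish)
    show "inj_on (\<lambda>i::nat. (2::nat) ^ (m * i)) {..<n}" using m1 by (auto simp: inj_on_def)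
    show "0 < n" using n1 by simp
    show "\<forall>i<n. 2 ^ (m * i) < card (UNIV::'a set)" using m1 by (auto simp: cardF)
  qed
  thus ?thesis by (simp add: tr_def')
qed

lemma tr_surj: "c \<in> Fq \<Longrightarrow> \<exists>w::'a. trace m n w = c"
proof -
  assume c: "c \<in> Fq"
  obtain w0 :: 'a where w0: "trace m n w0 \<noteq> 0" using tr_nonzero by blast
  have "c / trace m n w0 \<in> Fq" using c tr_Fq Fq_div by blast
  hence "trace m n ((c / trace m n w0) * w0) = (c / trace m n w0) * trace m n w0" by (rule tr_scal)
  hence "trace m n ((c / trace m n w0) * w0) = c" using w0 by simp
  thus ?thesis by blast
qed

lemma Fq_from_pow: "(x::'a) ^ (2 ^ (m*(n-1))) = x \<Longrightarrow> x \<in> Fq"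
proof -
  assume h: "x ^ (2 ^ (m*(n-1))) = x"
  have "m*n = m*(n-1) + m" using n1 by (simp add: algebra_simps)
  hence "x = (x ^ (2 ^ (m*(n-1)))) ^ (2 ^ m)" using fermat[of x] by (metis power_add power_mult)
  thus ?thesis using h by (simp add: inFq)
qed

lemma Fq_from_pow2: "(x::'a) ^ (2 ^ (2*m)) = x \<Longrightarrow> x \<in> Fq"
proof -
  assume h: "x ^ (2 ^ (2*m)) = x"
  have t: "x ^ (2 ^ (2*m*k)) = x" for k
  proof (induction k)
    case (Suc k)
    have "x ^ (2 ^ (2*m*Suc k)) = (x ^ (2 ^ (2*m*k))) ^ (2 ^ (2*m))"
      by (simp add: power_add power_mult[symmetric] algebra_simps)
    then show ?case using Suc h by simp
  qed simp
  obtain k where k: "n = 2*k+1" using nodd oddE by blast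
  have "x = x ^ (2 ^ (m*n))" using fermat by simp
  also have "\<dots> = (x ^ (2 ^ (2*m*k))) ^ (2 ^ m)" using k
    by (simp add: power_add power_mult[symmetric] algebra_simps)
  also have "\<dots> = x ^ (2 ^ m)" using t by simp
  finally show ?thesis by (simp add: inFq)
qed

lemma t2_add: "T2 m n ((x::'a) + y) = T2 m n x + T2 m n y"
  by (simp add: T2_def frob_add sum.distrib)

lemma t2_sum: "T2 m n (\<Sum>i\<in>A. f i) = (\<Sum>i\<in>A. T2 m n (f i :: 'a))"
  by (simp add: T2_def frob_sum sum.swap[of _ A])

lemma t2_sq: "T2 m n ((x::'a) ^ 2) = T2 m n x"
proof -
  have "T2 m n (x ^ 2) = (\<Sum>i<m*n. x ^ (2 ^ Suc i))"
    by (simp add: T2_def power_mult[symmetric] mult.commute)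
  also have "\<dots> = (\<Sum>i<m*n. x ^ (2 ^ i))"
  proof -
    have "(\<Sum>i<Suc (m*n). x ^ (2 ^ i)) = x ^ (2 ^ 0) + (\<Sum>i<m*n. x ^ (2 ^ Suc i))"
      by (rule sum.lessThan_Suc_shift)
    moreover have "(\<Sum>i<Suc (m*n). x ^ (2 ^ i)) = (\<Sum>i<m*n. x ^ (2 ^ i)) + x ^ (2 ^ (m*n))" by simp
    ultimately show ?thesis using fermat[of x] by (simp add: add.commute)
  qed
  finally show ?thesis by (simp add: T2_def)
qed

lemma t2_pow: "T2 m n ((x::'a) ^ (2 ^ k)) = T2 m n x"
proof (induction k)
  case (Suc k)
  have "x ^ (2 ^ Suc k) = (x ^ (2 ^ k)) ^ 2"
    by (simp add: power_mult[symmetric] mult.commute)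
  then show ?case using Suc t2_sq by simp
qed simp

lemma t2_nonzero: "\<exists>z::'a. T2 m n z \<noteq> 0"
proof -
  have "\<exists>x::'a. (\<Sum>i<m*n. x ^ (2 ^ i)) \<noteq> 0"
  proof (rule nonvanish)
    show "inj_on (\<lambda>i::nat. (2::nat) ^ i) {..<m*n}" by (auto simp: inj_on_def)
    show "0 < m*n" using mn1 by simp
    show "\<forall>i<m*n. 2 ^ i < card (UNIV::'a set)" by (auto simp: cardF)
  qed
  thus ?thesis by (simp add: T2_def)
qed

lemma t2_nondeg: "(y::'a) \<noteq> 0 \<Longrightarrow> \<exists>x. T2 m n (x * y) \<noteq> 0"
proof -
  assume y: "y \<noteq> 0"
  obtain z :: 'a where "T2 m n z \<noteq> 0" using t2_nonzero by blast
  hence "T2 m n ((z / y) * y) \<noteq> 0" using y by simp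
  thus ?thesis by blast
qed

lemma t2_tr: "c \<in> Fq \<Longrightarrow> T2 m n ((c::'a) * trace m n z) = T2 m n (c * z)"
proof -
  assume c: "c \<in> Fq"
  have "T2 m n (c * trace m n z) = (\<Sum>i<n. T2 m n (c * z ^ (2 ^ (m*i))))"
    by (simp add: tr_def' sum_distrib_left t2_sum)
  also have "\<dots> = (\<Sum>i<n. T2 m n ((c * z) ^ (2 ^ (m*i))))"
    using c by (simp add: power_mult_distrib Fq_pow)
  also have "\<dots> = (\<Sum>i<n. T2 m n (c * z))" by (simp only: t2_pow)
  also have "\<dots> = T2 m n (c * z)" by (simp add: of_nat_n)
  finally show ?thesis .
qed

end

context ff
begin

lemma lin2_add: "lin2 m n a ((x::'a) + y) = lin2 m n a x + lin2 m n a y"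
  by (simp add: lin2_def frob_add distrib_left sum.distrib)

lemma adj: "T2 m n (lin2 m n l (x::'a) * y) = T2 m n (x * adj2 m n l y)"
proof -
  have L: "T2 m n (lin2 m n l x * y) = (\<Sum>j<m*n. T2 m n (l j * x ^ (2 ^ j) * y))"
    by (simp add: lin2_def sum_distrib_right t2_sum)
  have R: "T2 m n (x * adj2 m n l y) = (\<Sum>j<m*n. T2 m n (x * (l j * y) ^ (2 ^ ((m*n - j) mod (m*n)))))"
    by (simp add: adj2_def sum_distrib_left t2_sum)
  have "T2 m n (l j * x ^ (2 ^ j) * y) = T2 m n (x * (l j * y) ^ (2 ^ ((m*n - j) mod (m*n))))"
    if j: "j < m*n" for j
  proof -
    define k where "k = (m*n - j) mod (m*n)"
    have jk: "(j + k) mod (m*n) = 0"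
    proof (cases "j = 0")
      case True then show ?thesis by (simp add: k_def)
    next
      case False
      hence "k = m*n - j" using j by (simp add: k_def)
      then show ?thesis using j by simp
    qed
    have xx: "x ^ (2 ^ j * 2 ^ k) = x"
      using pow_mod[of x "j+k"] jk by (simp add: power_add)
    have "T2 m n (l j * x ^ (2 ^ j) * y) = T2 m n ((l j * x ^ (2 ^ j) * y) ^ (2 ^ k))"
      by (simp only: t2_pow)
    also have "\<dots> = T2 m n (x ^ (2 ^ j * 2 ^ k) * (l j * y) ^ (2 ^ k))"
      by (simp add: power_mult_distrib power_mult mult_ac)
    also have "\<dots> = T2 m n (x * (l j * y) ^ (2 ^ k))" using xx by simp
    finally show ?thesis by (simp add: k_def)
  qed
  thus ?thesis using L R by simp
qed

lemma q_add: "trace m n (((x::'a) + y) ^ (2^m+1)) = trace m n (x ^ (2^m+1)) + trace m n (y ^ (2^m+1))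
   + (trace m n (x ^ (2^m) * y) + trace m n (x * y ^ (2^m)))"
proof -
  have "(x+y) ^ (2^m+1) = (x ^ (2^m) + y ^ (2^m)) * (x + y)"
    by (simp only: power_add power_one_right frob_add)
  also have "\<dots> = x ^ (2^m+1) + y ^ (2^m+1) + (x ^ (2^m) * y + x * y ^ (2^m))"
    by (simp only: power_add power_one_right distrib_left distrib_right mult.commute[of "x^(2^m)" x] mult.commute[of "y^(2^m)" x] mult.commute[of y "y^(2^m)"] add_ac)
  finally show ?thesis by (simp add: tr_add)
qed
lemma q_c: "(d::'a) \<in> Fq \<Longrightarrow> trace m n (d ^ (2^m+1)) = d ^ 2"
proof -
  assume d: "d \<in> Fq"
  hence "d ^ (2^m+1) = d ^ 2" by (simp add: power_add inFq power2_eq_square)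
  thus ?thesis using tr_const Fq_sq d by simp
qed

lemma b_c: "(d::'a) \<in> Fq \<Longrightarrow> trace m n (y ^ (2^m) * d) + trace m n (y * d ^ (2^m)) = 0"
proof -
  assume d: "d \<in> Fq"
  have "trace m n (y ^ (2^m) * d) = d * trace m n y"
    using tr_scal[OF d, of "y ^ (2^m)"] tr_pow1 by (simp add: mult.commute)
  moreover have "trace m n (y * d ^ (2^m)) = d * trace m n y"
    using tr_scal[OF d, of y] d by (simp add: inFq mult.commute)
  ultimately show ?thesis by simp
qed

lemma b_surj: "(d::'a) \<notin> Fq \<Longrightarrow> c \<in> Fq \<Longrightarrow> \<exists>y. trace m n (y ^ (2^m) * d) + trace m n (y * d ^ (2^m)) = c"
proof -
  assume d: "d \<notin> Fq" and c: "c \<in> Fq"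
  define K :: nat where "K = 2 ^ (m*(n-1))"
  have mn: "m*n = m + m*(n-1)" using n1 by (simp add: algebra_simps)
  have KK: "2 ^ m * K = 2 ^ (m*n)" unfolding K_def using mn by (metis power_add)
  have t1: "trace m n (y ^ (2^m) * d) = trace m n (y * d ^ K)" for y
  proof -
    have "trace m n (y ^ (2^m) * d) = trace m n ((y ^ (2^m) * d) ^ K)"
      unfolding K_def by (rule tr_pow[symmetric])
    also have "(y ^ (2^m) * d) ^ K = y ^ (2^m * K) * d ^ K" by (simp only: power_mult_distrib power_mult)
    also have "y ^ (2^m * K) = y" by (simp only: KK fermat)
    finally show ?thesis .
  qed
  define e where "e = d ^ K + d ^ (2^m)"
  have e0: "e \<noteq> 0"
  proof
    assume "e = 0"
    hence eq: "d ^ K = d ^ (2^m)" unfolding e_def using eq_iff_add by blast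
    have "(d ^ K) ^ (2^m) = d ^ (2^m * K)" by (simp only: power_mult[symmetric] mult.commute)
    hence a: "(d ^ K) ^ (2^m) = d" by (simp only: KK fermat)
    have "(d ^ (2^m)) ^ (2^m) = d ^ (2^m * 2^m)" by (simp only: power_mult[symmetric])
    also have "(2::nat)^m * 2^m = 2 ^ (2*m)" by (simp add: power_add[symmetric] mult_2)
    finally have "(d ^ (2^m)) ^ (2^m) = d ^ (2 ^ (2*m))" .
    hence "d ^ (2 ^ (2*m)) = d" using eq a by simp
    thus False using Fq_from_pow2 d by blast
  qed
  obtain w where w: "trace m n w = c" using tr_surj c by blast
  have "trace m n ((w/e) ^ (2^m) * d) + trace m n ((w/e) * d ^ (2^m)) = trace m n ((w/e) * d ^ K) + trace m n ((w/e) * d ^ (2^m))"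
    by (simp only: t1)
  also have "\<dots> = trace m n ((w/e) * e)" unfolding e_def by (simp only: tr_add[symmetric] distrib_left)
  also have "\<dots> = c" using e0 w by simp
  finally show ?thesis by blast
qed
end

context ff
begin

lemma crit:
  fixes M :: "'a \<Rightarrow> 'a"
  assumes Madd: "\<And>x y. M (x + y) = M x + M y"
  shows "bij (\<lambda>x. trace m n (x ^ (2^m+1)) + M x) \<longleftrightarrow>
     (\<forall>d. M d \<in> Fq \<longrightarrow> d \<in> Fq) \<and> (\<forall>d\<in>Fq. d \<noteq> 0 \<longrightarrow> M d \<noteq> d ^ 2)"
proof -
  define f where "f = (\<lambda>x. trace m n (x ^ (2^m+1)) + M x)"
  define Q where "Q = (\<lambda>x::'a. trace m n (x ^ (2^m+1)))"
  define B where "B = (\<lambda>y d::'a. trace m n (y ^ (2^m) * d) + trace m n (y * d ^ (2^m)))"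
  have key: "f (y + d) = f y + (Q d + B y d + M d)" for y d
    unfolding f_def Q_def B_def q_add Madd by (simp only: add_ac)
  have QF: "Q d \<in> Fq" for d by (simp add: Q_def tr_Fq)
  have BF: "B y d \<in> Fq" for y d by (simp add: B_def tr_Fq Fq_add)
  have Qc: "d \<in> Fq \<Longrightarrow> Q d = d^2" for d unfolding Q_def by (rule q_c)
  have Bc: "d \<in> Fq \<Longrightarrow> B y d = 0" for y d unfolding B_def by (rule b_c)
  have cancel: "a + s = a \<longleftrightarrow> s = (0::'a)" for a s by (metis add_cancel_left_right)
  show ?thesis unfolding f_def[symmetric]
  proof
    assume "bij f"
    hence inj: "inj f" by (simp add: bij_def)
    have C1: "M d \<in> Fq \<longrightarrow> d \<in> Fq" for d
    proof (intro impI, rule ccontr)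
      assume Md: "M d \<in> Fq" and d: "d \<notin> Fq"
      have "Q d + M d \<in> Fq" using QF Md Fq_add by blast
      then obtain y where y: "B y d = Q d + M d" using b_surj[OF d] by (auto simp: B_def)
      have z: "Q d + B y d + M d = 0" using y by (simp add: add.assoc char2)
      have "f (y + d) = f y" using key[of y d] z by simp
      hence "y + d = y" using inj by (simp add: inj_eq)
      hence "d = 0" by (simp add: cancel)
      thus False using d Fq_0 by simp
    qed
    have C2: "d \<in> Fq \<longrightarrow> d \<noteq> 0 \<longrightarrow> M d \<noteq> d ^ 2" for d
    proof (intro impI notI)
      assume d: "d \<in> Fq" "d \<noteq> 0" and Md: "M d = d ^ 2"
      have "f (0 + d) = f 0" using key[of 0 d] Qc[OF d(1)] Bc[OF d(1)] Md by simp
      hence "0 + d = 0" using inj by (simp add: inj_eq)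
      thus False using d by simp
    qed
    show "(\<forall>d. M d \<in> Fq \<longrightarrow> d \<in> Fq) \<and> (\<forall>d\<in>Fq. d \<noteq> 0 \<longrightarrow> M d \<noteq> d ^ 2)"
      using C1 C2 by blast
  next
    assume C: "(\<forall>d. M d \<in> Fq \<longrightarrow> d \<in> Fq) \<and> (\<forall>d\<in>Fq. d \<noteq> 0 \<longrightarrow> M d \<noteq> d ^ 2)"
    have "inj f"
    proof (rule injI)
      fix x y assume fxy: "f x = f y"
      define d where "d = x + y"
      have xd: "x = y + d" by (simp add: d_def add.left_commute[of y x])
      have "f y + (Q d + B y d + M d) = f y" using key[of y d] fxy xd by simp
      hence S: "Q d + B y d + M d = 0" by (simp add: cancel)
      hence "M d = Q d + B y d" by (metis eq_iff_add add.commute)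
      hence "M d \<in> Fq" using QF BF Fq_add by simp
      hence dF: "d \<in> Fq" using C by blast
      hence "d ^ 2 + M d = 0" using S Qc Bc by simp
      hence "M d = d ^ 2" by (metis eq_iff_add add.commute)
      hence "d = 0" using C dF by blast
      thus "x = y" using xd by simp
    qed
    thus "bij f" by (simp add: bij_def finite_UNIV_inj_surj)
  qed
qed

end

context ff
begin

lemma t2_zero [simp]: "T2 m n (0::'a) = 0"
  by (simp add: T2_def power_0_left)

lemma swap_add: "(a::'a) = b + c \<Longrightarrow> b = a + c"
  by (simp add: add.assoc)

lemma fq_dual: "(x::'a) \<notin> Fq \<Longrightarrow> \<exists>w. T2 m n (x * (w ^ (2^m) + w)) \<noteq> 0"
proof -
  assume x: "x \<notin> Fq"
  define K :: nat where "K = 2 ^ (m*(n-1))"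
  have mn: "m*n = m + m*(n-1)" using n1 by (simp add: algebra_simps)
  have KK: "2 ^ m * K = 2 ^ (m*n)" unfolding K_def using mn by (metis power_add)
  define u where "u = x ^ K + x"
  have u0: "u \<noteq> 0"
  proof
    assume "u = 0"
    hence "x ^ K = x" unfolding u_def using eq_iff_add by blast
    thus False using Fq_from_pow x K_def by blast
  qed
  obtain w where w: "T2 m n (w * u) \<noteq> 0" using t2_nondeg[OF u0] by blast
  have "T2 m n (x * w ^ (2^m)) = T2 m n ((x * w ^ (2^m)) ^ K)"
    unfolding K_def by (rule t2_pow[symmetric])
  also have "(x * w ^ (2^m)) ^ K = x ^ K * w ^ (2^m * K)" by (simp only: power_mult_distrib power_mult)
  also have "w ^ (2^m * K) = w" by (simp only: KK fermat)
  finally have "T2 m n (x * (w ^ (2^m) + w)) = T2 m n (x ^ K * w) + T2 m n (x * w)"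
    by (simp only: distrib_left t2_add)
  also have "\<dots> = T2 m n (w * u)" unfolding u_def by (simp only: t2_add[symmetric] distrib_left distrib_right mult.commute)
  finally show ?thesis using w by metis
qed

lemma t2_Fq_nz: "(c::'a) \<in> Fq \<Longrightarrow> c \<noteq> 0 \<Longrightarrow> \<exists>e\<in>Fq. T2 m n (c * e) \<noteq> 0"
proof -
  assume c: "c \<in> Fq" "c \<noteq> 0"
  obtain z where "T2 m n (z * c) \<noteq> 0" using t2_nondeg[OF c(2)] by blast
  hence "T2 m n (c * trace m n z) \<noteq> 0" using t2_tr[OF c(1)] by (simp add: mult.commute)
  thus ?thesis using tr_Fq by blast
qed

lemma card_Fq: "card Fq \<le> 2 ^ m"
proof -
  define p :: "'a poly" where "p = monom 1 (2^m) - [:0,1:]"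
  have two: "(2::nat) ^ m \<noteq> 1" using m1 by simp
  have "coeff p (2^m) = 1" using two by (simp add: p_def coeff_pCons split: nat.split)
  hence p0: "p \<noteq> 0" by auto
  have "degree p \<le> 2^m" unfolding p_def
    by (rule degree_diff_le) (auto simp: degree_monom_le intro: order.trans[of _ 1])
  moreover have "{x. poly p x = 0} = Fq" by (auto simp: p_def inFq poly_monom)
  ultimately show ?thesis using card_poly_roots_bound[OF p0] by simp
qed

end

context ff
begin

lemma tr_lin_add: "trace m n (lin2 m n l ((x::'a) + y)) = trace m n (lin2 m n l x) + trace m n (lin2 m n l y)"
  by (simp add: lin2_add tr_add)

lemma part0:
  assumes perm: "bij (\<lambda>x::'a. trace m n (x ^ (2 ^ m + 1)) + lin2 m n a x)"
  shows "(\<forall>d. lin2 m n a d \<in> Fq \<longrightarrow> d \<in> Fq) \<and> (\<forall>d\<in>Fq. d \<noteq> 0 \<longrightarrow> lin2 m n a d \<noteq> d ^ 2)"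
  using crit[of "lin2 m n a"] lin2_add perm by blast

lemma kernel:
  assumes perm: "bij (\<lambda>x::'a. trace m n (x ^ (2 ^ m + 1)) + lin2 m n a x)"
  shows "card {x::'a. lin2 m n a x = 0} \<le> 2 ^ m"
proof -
  have "{x::'a. lin2 m n a x = 0} \<subseteq> Fq" using part0[OF perm] Fq_0 by auto
  hence "card {x::'a. lin2 m n a x = 0} \<le> card Fq" by (rule card_mono[rotated]) simp
  thus ?thesis using card_Fq by linarith
qed

lemma part_i:
  assumes perm: "bij (\<lambda>x::'a. trace m n (x ^ (2 ^ m + 1)) + lin2 m n a x)"
    and H1: "adj2 m n l ` {x::'a. trace m n x = 0} = {x. trace m n x = 0}"
    and H2: "\<forall>x::'a. trace m n (adj2 m n l x) = trace m n x"
  shows "bij (\<lambda>x::'a. trace m n (x ^ (2 ^ m + 1)) + lin2 m n a (lin2 m n l x))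
         \<and> bij (\<lambda>x::'a. trace m n (x ^ (2 ^ m + 1)) + lin2 m n l (lin2 m n a x))"
proof -
  note C = part0[OF perm]
  have A: "lin2 m n l c = c" if c: "c \<in> Fq" for c :: 'a
  proof (rule ccontr)
    assume "lin2 m n l c \<noteq> c"
    hence "lin2 m n l c + c \<noteq> 0" using eq_iff_add by blast
    then obtain y where y: "T2 m n (y * (lin2 m n l c + c)) \<noteq> 0" using t2_nondeg by blast
    have "T2 m n (y * (lin2 m n l c + c)) = T2 m n (lin2 m n l c * y) + T2 m n (c * y)"
      by (simp add: distrib_left t2_add mult.commute)
    also have "\<dots> = T2 m n (c * adj2 m n l y) + T2 m n (c * y)" by (simp add: adj)
    also have "\<dots> = T2 m n (c * trace m n (adj2 m n l y)) + T2 m n (c * trace m n y)"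
      using t2_tr[OF c] by simp
    also have "\<dots> = 0" using H2 by simp
    finally show False using y by simp
  qed
  have B: "x \<in> Fq" if lx: "lin2 m n l x \<in> Fq" for x :: 'a
  proof (rule ccontr)
    assume x: "x \<notin> Fq"
    obtain w where w: "T2 m n (x * (w ^ (2^m) + w)) \<noteq> 0" using fq_dual[OF x] by blast
    have "trace m n (w ^ (2^m) + w) = 0" by (simp add: tr_add tr_pow1)
    hence "w ^ (2^m) + w \<in> adj2 m n l ` {x::'a. trace m n x = 0}" using H1 by simp
    then obtain k where k: "trace m n k = 0" "w ^ (2^m) + w = adj2 m n l k" by auto
    have "T2 m n (x * (w ^ (2^m) + w)) = T2 m n (lin2 m n l x * k)" using k(2) adj by simp
    also have "\<dots> = T2 m n (lin2 m n l x * trace m n k)" using t2_tr[OF lx] by simp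
    also have "\<dots> = 0" using k(1) by simp
    finally show False using w by simp
  qed
  have b1: "bij (\<lambda>x::'a. trace m n (x ^ (2 ^ m + 1)) + lin2 m n a (lin2 m n l x))"
  proof -
    have add: "\<And>x y. lin2 m n a (lin2 m n l (x + y)) = lin2 m n a (lin2 m n l x) + lin2 m n a (lin2 m n l y)"
      by (simp add: lin2_add)
    have "(\<forall>d. lin2 m n a (lin2 m n l d) \<in> Fq \<longrightarrow> d \<in> Fq) \<and>
          (\<forall>d\<in>Fq. d \<noteq> 0 \<longrightarrow> lin2 m n a (lin2 m n l d) \<noteq> d ^ 2)"
    proof (intro conjI allI impI ballI)
      fix d :: 'a assume "lin2 m n a (lin2 m n l d) \<in> Fq"
      thus "d \<in> Fq" using C B by blast
    next
      fix d :: 'a assume d: "d \<in> Fq" "d \<noteq> 0"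
      hence "lin2 m n l d = d" using A by blast
      thus "lin2 m n a (lin2 m n l d) \<noteq> d ^ 2" using C d by metis
    qed
    thus ?thesis using crit[OF add] by blast
  qed
  have b2: "bij (\<lambda>x::'a. trace m n (x ^ (2 ^ m + 1)) + lin2 m n l (lin2 m n a x))"
  proof -
    have add: "\<And>x y. lin2 m n l (lin2 m n a (x + y)) = lin2 m n l (lin2 m n a x) + lin2 m n l (lin2 m n a y)"
      by (simp add: lin2_add)
    have c2: "lin2 m n l (lin2 m n a d) \<noteq> d ^ 2" if d: "d \<in> Fq" "d \<noteq> 0" for d
    proof
      assume h: "lin2 m n l (lin2 m n a d) = d ^ 2"
      have "d ^ 2 \<in> Fq" using Fq_sq d by blast
      hence "lin2 m n a d \<in> Fq" using B h by metis
      hence "lin2 m n l (lin2 m n a d) = lin2 m n a d" using A by blast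
      thus False using h C d by metis
    qed
    have "(\<forall>d. lin2 m n l (lin2 m n a d) \<in> Fq \<longrightarrow> d \<in> Fq) \<and>
          (\<forall>d\<in>Fq. d \<noteq> 0 \<longrightarrow> lin2 m n l (lin2 m n a d) \<noteq> d ^ 2)"
      using C B c2 by blast
    thus ?thesis using crit[OF add] by blast
  qed
  show ?thesis using b1 b2 by blast
qed

lemma part_ii:
  assumes perm: "bij (\<lambda>x::'a. trace m n (x ^ (2 ^ m + 1)) + lin2 m n a x)"
    and H: "bij_betw (\<lambda>x::'a. x + trace m n (adj2 m n l x)) Fq Fq"
  shows "bij (\<lambda>x::'a. trace m n (x ^ (2 ^ m + 1)) + lin2 m n a x
                 + lin2 m n a (trace m n (lin2 m n l x)) + (trace m n (lin2 m n l x)) ^ 2)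
         \<and> bij (\<lambda>x::'a. trace m n (x ^ (2 ^ m + 1)) + lin2 m n a x
                 + trace m n (lin2 m n l (lin2 m n a x)) + trace m n (lin2 m n l (x ^ 2)))"
proof -
  note C = part0[OF perm]
  define phi where "phi = (\<lambda>x::'a. trace m n (lin2 m n l x))"
  have phiF: "phi x \<in> Fq" for x by (simp add: phi_def tr_Fq)
  have phiadd: "phi (x + y) = phi x + phi y" for x y by (simp add: phi_def tr_lin_add)
  have hinj: "c = 0" if c: "c \<in> Fq" "c + phi c = 0" for c :: 'a
  proof (rule ccontr)
    assume c0: "c \<noteq> 0"
    have pc: "phi c = c" using c(2) eq_iff_add by (metis add.commute)
    have "T2 m n (c * e) = 0" if e: "e \<in> Fq" for e
    proof -
      obtain d where d: "d \<in> Fq" "e = d + trace m n (adj2 m n l d)"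
        using H e unfolding bij_betw_def by auto
      have "T2 m n (c * e) = T2 m n (c * d) + T2 m n (c * trace m n (adj2 m n l d))"
        by (simp add: d(2) distrib_left t2_add)
      also have "T2 m n (c * trace m n (adj2 m n l d)) = T2 m n (c * adj2 m n l d)"
        using t2_tr[OF c(1)] by simp
      also have "\<dots> = T2 m n (lin2 m n l c * d)" by (simp add: adj)
      also have "\<dots> = T2 m n (d * trace m n (lin2 m n l c))"
        using t2_tr[OF d(1)] by (simp add: mult.commute)
      also have "\<dots> = T2 m n (d * c)" using pc by (simp add: phi_def)
      finally show ?thesis by (simp add: mult.commute)
    qed
    thus False using t2_Fq_nz[OF c(1) c0] by blast
  qed
  define M1 where "M1 = (\<lambda>x::'a. lin2 m n a x + lin2 m n a (phi x) + (phi x) ^ 2)"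
  have add1: "\<And>x y. M1 (x + y) = M1 x + M1 y"
    by (simp add: M1_def lin2_add phiadd sq_add add_ac)
  have c11: "d \<in> Fq" if h: "M1 d \<in> Fq" for d
  proof -
    have "lin2 m n a (d + phi d) = M1 d + (phi d) ^ 2"
      by (simp add: M1_def lin2_add add.assoc char2)
    hence "lin2 m n a (d + phi d) \<in> Fq" using h phiF Fq_sq Fq_add by simp
    hence "d + phi d \<in> Fq" using C by blast
    hence "d + phi d + phi d \<in> Fq" using phiF Fq_add by blast
    thus ?thesis by (simp add: add.assoc)
  qed
  have c12: "M1 d \<noteq> d ^ 2" if d: "d \<in> Fq" "d \<noteq> 0" for d
  proof
    assume h: "M1 d = d ^ 2"
    have eF: "d + phi d \<in> Fq" using d phiF Fq_add by blast
    have "d + phi d \<noteq> 0" using hinj d by blast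
    hence ne: "lin2 m n a (d + phi d) \<noteq> (d + phi d) ^ 2" using C eF by blast
    have "lin2 m n a (d + phi d) = M1 d + (phi d) ^ 2"
      by (simp add: M1_def lin2_add add.assoc char2)
    also have "\<dots> = (d + phi d) ^ 2" using h by (simp add: sq_add)
    finally show False using ne by simp
  qed
  have bij1: "bij (\<lambda>x. trace m n (x ^ (2 ^ m + 1)) + M1 x)"
    using crit[OF add1] c11 c12 by blast
  define M2 where "M2 = (\<lambda>x::'a. lin2 m n a x + phi (lin2 m n a x) + phi (x ^ 2))"
  have add2: "\<And>x y. M2 (x + y) = M2 x + M2 y"
    by (simp add: M2_def lin2_add phiadd sq_add add_ac)
  have c21: "d \<in> Fq" if h: "M2 d \<in> Fq" for d
  proof -
    have eq: "lin2 m n a d = M2 d + phi (lin2 m n a d) + phi (d ^ 2)"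
      by (simp add: M2_def add.assoc char2)
    have "M2 d + phi (lin2 m n a d) + phi (d ^ 2) \<in> Fq" using h phiF Fq_add by blast
    hence "lin2 m n a d \<in> Fq" by (subst eq)
    thus ?thesis using C by blast
  qed
  have c22: "M2 d \<noteq> d ^ 2" if d: "d \<in> Fq" "d \<noteq> 0" for d
  proof
    assume h: "M2 d = d ^ 2"
    have eq: "lin2 m n a d = M2 d + phi (lin2 m n a d) + phi (d ^ 2)"
      by (simp add: M2_def add.assoc char2)
    have "d ^ 2 \<in> Fq" using d Fq_sq by blast
    hence "M2 d \<in> Fq" by (simp only: h)
    hence "M2 d + phi (lin2 m n a d) + phi (d ^ 2) \<in> Fq" by (intro Fq_add phiF)
    hence LF: "lin2 m n a d \<in> Fq" by (subst eq)
    define e where "e = lin2 m n a d + d ^ 2"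
    have eF: "e \<in> Fq" unfolding e_def using LF d by (intro Fq_add Fq_sq)
    have "e + phi e = M2 d + d ^ 2"
      by (simp add: e_def M2_def phiadd add_ac)
    hence "e + phi e = 0" using h by simp
    hence "e = 0" using hinj eF by blast
    hence "lin2 m n a d + d ^ 2 = 0" by (simp only: e_def)
    hence "lin2 m n a d = d ^ 2" by (rule eq_iff_add[THEN iffD2])
    thus False using C d by blast
  qed
  have bij2: "bij (\<lambda>x. trace m n (x ^ (2 ^ m + 1)) + M2 x)"
    using crit[OF add2] c21 c22 by blast
  have e1: "(\<lambda>x::'a. trace m n (x ^ (2 ^ m + 1)) + lin2 m n a x
                 + lin2 m n a (trace m n (lin2 m n l x)) + (trace m n (lin2 m n l x)) ^ 2)
         = (\<lambda>x. trace m n (x ^ (2 ^ m + 1)) + M1 x)"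
    unfolding M1_def phi_def by (rule ext) (simp only: add.assoc)
  have e2: "(\<lambda>x::'a. trace m n (x ^ (2 ^ m + 1)) + lin2 m n a x
                 + trace m n (lin2 m n l (lin2 m n a x)) + trace m n (lin2 m n l (x ^ 2)))
         = (\<lambda>x. trace m n (x ^ (2 ^ m + 1)) + M2 x)"
    unfolding M2_def phi_def by (rule ext) (simp only: add.assoc)
  show ?thesis using bij1 bij2 e1 e2 by simp
qed

end

theorem mainTheorem9:
  fixes m n :: nat and a l :: "nat \<Rightarrow> 'a::{field,finite}"
  assumes "m \<ge> 1"
    and "odd n"
    and "card (UNIV :: 'a set) = 2 ^ (m * n)"
    and perm: "bij (\<lambda>x::'a. trace m n (x ^ (2 ^ m + 1)) + lin2 m n a x)"
  shows "card {x::'a. lin2 m n a x = 0} \<le> 2 ^ m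
    \<and> ((adj2 m n l ` {x::'a. trace m n x = 0} = {x. trace m n x = 0}
         \<and> (\<forall>x::'a. trace m n (adj2 m n l x) = trace m n x)) \<longrightarrow>
         bij (\<lambda>x::'a. trace m n (x ^ (2 ^ m + 1)) + lin2 m n a (lin2 m n l x))
         \<and> bij (\<lambda>x::'a. trace m n (x ^ (2 ^ m + 1)) + lin2 m n l (lin2 m n a x)))
    \<and> (bij_betw (\<lambda>x::'a. x + trace m n (adj2 m n l x)) (subfield_q m) (subfield_q m) \<longrightarrow>
         bij (\<lambda>x::'a. trace m n (x ^ (2 ^ m + 1)) + lin2 m n a x
                 + lin2 m n a (trace m n (lin2 m n l x)) + (trace m n (lin2 m n l x)) ^ 2)
         \<and> bij (\<lambda>x::'a. trace m n (x ^ (2 ^ m + 1)) + lin2 m n a x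
                 + trace m n (lin2 m n l (lin2 m n a x)) + trace m n (lin2 m n l (x ^ 2))))"
proof -
  interpret ff m n "TYPE('a)" using assms(1-3) by unfold_locales
  show ?thesis using kernel[OF perm] part_i[OF perm] part_ii[OF perm] by blast
qed

end
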